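(* There is a comeager set $C\subseteq(\mathbb R^{\mathbb N})^{\mathbb N}$ such that $({=^{+2}}\restriction C)\le_B{=^+}$.
   Context: For an equivalence relation $E$ on $X$, the Friedman–Stanley jump $E^+$ is the equivalence relation on $X^{\mathbb N}$ given by $x\mathrel{E^+}y\iff\{[x(i)]_E:i\in\mathbb N\}=\{[y(i)]_E:i\in\mathbb N\}$. Here $=^+$ is $(=_{\mathbb R})^+$ on $\mathbb R^{\mathbb N}$ and $=^{+2}=(=^+)^+$ on $(\mathbb R^{\mathbb N})^{\mathbb N}$, with the product topologies. *)

theory Defs
  imports "HOL-Analysis.Analysis"
begin

definition FS_jump :: "('a \<Rightarrow> 'a \<Rightarrow> bool) \<Rightarrow> (nat \<Rightarrow> 'a) \<Rightarrow> (nat \<Rightarrow> 'a) \<Rightarrow> bool" where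
  "FS_jump E x y \<longleftrightarrow> (\<lambda>i. {z. E (x i) z}) ` UNIV = (\<lambda>i. {z. E (y i) z}) ` UNIV"

definition eq_plus :: "(nat \<Rightarrow> real) \<Rightarrow> (nat \<Rightarrow> real) \<Rightarrow> bool" where
  "eq_plus = FS_jump (=)"

definition eq_plus2 :: "(nat \<Rightarrow> nat \<Rightarrow> real) \<Rightarrow> (nat \<Rightarrow> nat \<Rightarrow> real) \<Rightarrow> bool" where
  "eq_plus2 = FS_jump eq_plus"

definition comeager :: "'a::topological_space set \<Rightarrow> bool" where
  "comeager C \<longleftrightarrow> (\<exists>G :: nat \<Rightarrow> 'a set. (\<forall>n. open (G n) \<and> closure (G n) = UNIV) \<and> (\<Inter>n. G n) \<subseteq> C)"

definition borel_reducible_on ::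
  "'a::topological_space set \<Rightarrow> ('a \<Rightarrow> 'a \<Rightarrow> bool) \<Rightarrow> ('b::topological_space \<Rightarrow> 'b \<Rightarrow> bool) \<Rightarrow> bool" where
  "borel_reducible_on C E F \<longleftrightarrow>
     (\<exists>f. f \<in> measurable (restrict_space borel C) borel \<and>
          (\<forall>x\<in>C. \<forall>y\<in>C. E x y \<longleftrightarrow> F (f x) (f y)))"

end

theory Submission imports Defs "HOL-Analysis.Analysis" begin


definition qq :: "nat \<Rightarrow> real" where "qq k = real_of_rat (from_nat k)"

definition DD :: "real \<Rightarrow> real \<Rightarrow> nat \<Rightarrow> bool" where
  "DD a b m = (if even m then a < qq (m div 2) else b < qq (m div 2))"

definition cc :: "(nat \<Rightarrow> bool) \<Rightarrow> nat \<Rightarrow> real" where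
  "cc s m = (if s m then 1 else 0) * (1/3)^m"

definition PP :: "real \<Rightarrow> real \<Rightarrow> real" where
  "PP a b = suminf (cc (DD a b))"

lemma cc_summable: "summable (cc s)"
  by (rule summable_comparison_test[of _ "\<lambda>m. (1/3::real)^m"])
     (auto simp: cc_def summable_geometric)

lemma cc_nonneg: "cc s m \<ge> 0" by (simp add: cc_def)

lemma cc_less:
  assumes "s n" "\<not> t n" "\<And>m. m < n \<Longrightarrow> s m = t m"
  shows "suminf (cc t) < suminf (cc s)"
proof -
  define d where "d m = (if m \<le> n then cc t m else (1/3::real)^m)" for m
  have sd: "summable d"
    by (rule summable_comparison_test[of _ "\<lambda>m. (1/3::real)^m"])
       (auto simp: d_def cc_def summable_geometric)
  have "suminf (cc t) \<le> suminf d"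
    by (rule suminf_le) (auto simp: d_def cc_def cc_summable sd)
  also have "suminf d = suminf (\<lambda>m. d (m + Suc n)) + sum d {..<Suc n}"
    by (rule suminf_split_initial_segment[OF sd])
  also have "suminf (\<lambda>m. d (m + Suc n)) = (1/3)^(Suc n) * (3/2)"
  proof -
    have "(\<lambda>m. d (m + Suc n)) = (\<lambda>m. (1/3)^(Suc n) * (1/3::real)^m)"
      by (auto simp: d_def power_add fun_eq_iff)
    moreover have "(\<lambda>m. (1/3)^(Suc n) * (1/3::real)^m) sums ((1/3)^(Suc n) * (1 / (1 - 1/3)))"
      by (intro sums_mult geometric_sums) auto
    ultimately show ?thesis by (simp add: sums_iff)
  qed
  also have "sum d {..<Suc n} = sum (cc s) {..<n}"
    using assms by (auto simp: d_def cc_def intro!: sum.cong)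
  also have "(1/3)^(Suc n) * (3/2) + sum (cc s) {..<n} < sum (cc s) {..<Suc n}"
    using assms by (simp add: cc_def)
  also have "\<dots> \<le> suminf (cc s)"
    by (rule sum_le_suminf[OF cc_summable]) (auto simp: cc_nonneg)
  finally show ?thesis .
qed

lemma cc_inj: assumes "suminf (cc s) = suminf (cc t)" shows "s = t"
proof (rule ccontr)
  assume "s \<noteq> t"
  then have ex: "\<exists>m. s m \<noteq> t m" by auto
  define n where "n = (LEAST m. s m \<noteq> t m)"
  have n1: "s n \<noteq> t n" unfolding n_def by (rule LeastI_ex[OF ex])
  have n2: "\<And>m. m < n \<Longrightarrow> s m = t m" unfolding n_def using not_less_Least by blast
  show False
  proof (cases "s n")
    case True
    then show ?thesis using cc_less[of s n t] n1 n2 assms by auto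
  next
    case False
    then show ?thesis using cc_less[of t n s] n1 n2 assms by auto
  qed
qed

lemma qq_sep: assumes "(a::real) < b" shows "\<exists>k. a < qq k \<and> qq k < b"
proof -
  obtain r where "r \<in> \<rat>" "a < r" "r < b" using Rats_dense_in_real[OF assms] by blast
  then obtain r' where "r = real_of_rat r'" by (auto simp: Rats_def)
  then show ?thesis using \<open>a < r\<close> \<open>r < b\<close> by (intro exI[of _ "to_nat r'"]) (simp add: qq_def)
qed

lemma qq_inj: assumes "\<And>k. (a < qq k) = (b < qq k)" shows "a = (b::real)"
proof (rule ccontr)
  assume "a \<noteq> b"
  then consider "a < b" | "b < a" by linarith
  then show False
  proof cases
    case 1 then obtain k where "a < qq k" "qq k < b" using qq_sep by blast
    then show False using assms[of k] by auto
  next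
    case 2 then obtain k where "b < qq k" "qq k < a" using qq_sep by blast
    then show False using assms[of k] by auto
  qed
qed

lemma PP_inj: assumes "PP a b = PP a' b'" shows "a = a' \<and> b = b'"
proof -
  have D: "DD a b = DD a' b'" using cc_inj assms by (simp add: PP_def)
  have "a = a'"
  proof (rule qq_inj)
    fix k show "(a < qq k) = (a' < qq k)" using fun_cong[OF D, of "2*k"] by (simp add: DD_def)
  qed
  moreover have "b = b'"
  proof (rule qq_inj)
    fix k show "(b < qq k) = (b' < qq k)" using fun_cong[OF D, of "2*k+1"] by (simp add: DD_def)
  qed
  ultimately show ?thesis by simp
qed

lemma PP_meas[measurable]:
  assumes [measurable]: "g \<in> borel_measurable M" "h \<in> borel_measurable M"
  shows "(\<lambda>x. PP (g x) (h x)) \<in> borel_measurable M"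
  unfolding PP_def cc_def DD_def by measurable



lemma eq_plus_iff: "eq_plus u v \<longleftrightarrow> range u = range v"
proof -
  have "eq_plus u v \<longleftrightarrow> (\<lambda>a. {a}) ` range u = (\<lambda>a. {a}) ` range v"
    unfolding eq_plus_def FS_jump_def by (simp add: image_image)
  also have "\<dots> \<longleftrightarrow> range u = range v"
    by (rule inj_image_eq_iff) (auto simp: inj_def)
  finally show ?thesis .
qed

lemma Collect_eq_plus: "Collect (eq_plus u) = {z. range u = range z}"
  by (rule set_eqI) (simp add: eq_plus_iff)

lemma eq_plus2_iff: "eq_plus2 x y \<longleftrightarrow> (\<lambda>i. range (x i)) ` UNIV = (\<lambda>i. range (y i)) ` UNIV"
proof -
  define K where "K A = {z::nat\<Rightarrow>real. A = range z}" for A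
  have "eq_plus2 x y \<longleftrightarrow> K ` ((\<lambda>i. range (x i)) ` UNIV) = K ` ((\<lambda>i. range (y i)) ` UNIV)"
    unfolding eq_plus2_def FS_jump_def K_def by (simp add: image_image Collect_eq_plus)
  also have "\<dots> \<longleftrightarrow> (\<lambda>i. range (x i)) ` UNIV = (\<lambda>i. range (y i)) ` UNIV"
  proof (rule inj_on_image_eq_iff)
    show "inj_on K (range ` (UNIV :: (nat \<Rightarrow> real) set))"
    proof (rule inj_onI)
      fix A B assume AB: "A \<in> range ` (UNIV :: (nat \<Rightarrow> real) set)" "B \<in> range ` (UNIV :: (nat \<Rightarrow> real) set)" "K A = K B"
      then obtain u :: "nat \<Rightarrow> real" where u: "A = range u" by blast
      then have "u \<in> K A" by (simp add: K_def)
      then have "u \<in> K B" using AB by simp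
      then show "A = B" by (simp add: K_def u)
    qed
  qed auto
  finally show ?thesis .
qed

lemma family_recover:
  assumes "\<And>A B. A \<in> F \<Longrightarrow> B \<in> F \<Longrightarrow> A \<noteq> B \<Longrightarrow> A \<inter> B = {}" "{} \<notin> F"
  shows "F = {{b. (a,b) \<in> (\<Union>A\<in>F. A \<times> A)} | a. (a,a) \<in> (\<Union>A\<in>F. A \<times> A)}"
proof -
  have key: "{b. (a,b) \<in> (\<Union>A\<in>F. A \<times> A)} = A" if "A \<in> F" "a \<in> A" for A a
    using assms(1) that by blast
  show ?thesis
  proof (intro set_eqI iffI)
    fix A assume "A \<in> F"
    then obtain a where "a \<in> A" using assms(2) by (metis all_not_in_conv)
    then show "A \<in> {{b. (a,b) \<in> (\<Union>A\<in>F. A \<times> A)} | a. (a,a) \<in> (\<Union>A\<in>F. A \<times> A)}"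
      using key[OF \<open>A \<in> F\<close>] \<open>A \<in> F\<close> by blast
  next
    fix A assume "A \<in> {{b. (a,b) \<in> (\<Union>A\<in>F. A \<times> A)} | a. (a,a) \<in> (\<Union>A\<in>F. A \<times> A)}"
    then obtain a B where "B \<in> F" "a \<in> B" "A = {b. (a,b) \<in> (\<Union>A\<in>F. A \<times> A)}" by blast
    then show "A \<in> F" using key by auto
  qed
qed

definition CC :: "(nat \<Rightarrow> nat \<Rightarrow> real) set" where
  "CC = {x. \<forall>i k j l. (i,k) \<noteq> (j,l) \<longrightarrow> x i k \<noteq> x j l}"

definition ff :: "(nat \<Rightarrow> nat \<Rightarrow> real) \<Rightarrow> nat \<Rightarrow> real" where
  "ff x n = (case prod_decode n of (i, m) \<Rightarrow> case prod_decode m of (k, l) \<Rightarrow> PP (x i k) (x i l))"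

lemma range_ff: "range (ff x) = (\<lambda>(a,b). PP a b) ` (\<Union>A\<in>(\<lambda>i. range (x i)) ` UNIV. A \<times> A)"
proof (intro set_eqI iffI)
  fix z assume "z \<in> range (ff x)"
  then obtain n where "z = ff x n" by auto
  then show "z \<in> (\<lambda>(a,b). PP a b) ` (\<Union>A\<in>(\<lambda>i. range (x i)) ` UNIV. A \<times> A)"
    by (auto simp: ff_def split: prod.splits)
next
  fix z assume "z \<in> (\<lambda>(a,b). PP a b) ` (\<Union>A\<in>(\<lambda>i. range (x i)) ` UNIV. A \<times> A)"
  then obtain i k l where "z = PP (x i k) (x i l)" by auto
  then have "z = ff x (prod_encode (i, prod_encode (k, l)))" by (simp add: ff_def)
  then show "z \<in> range (ff x)" by simp
qed

lemma CC_fam: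
  assumes "x \<in> CC"
  shows "\<And>A B. A \<in> (\<lambda>i. range (x i)) ` UNIV \<Longrightarrow> B \<in> (\<lambda>i. range (x i)) ` UNIV \<Longrightarrow> A \<noteq> B \<Longrightarrow> A \<inter> B = {}"
    and "{} \<notin> (\<lambda>i. range (x i)) ` UNIV"
proof -
  fix A B assume "A \<in> (\<lambda>i. range (x i)) ` UNIV" "B \<in> (\<lambda>i. range (x i)) ` UNIV" "A \<noteq> B"
  then obtain i j where ij: "A = range (x i)" "B = range (x j)" "i \<noteq> j" by auto
  show "A \<inter> B = {}"
  proof (rule ccontr)
    assume "A \<inter> B \<noteq> {}"
    then obtain k l where "x i k = x j l" using ij by auto
    then show False using assms ij(3) unfolding CC_def by blast
  qed
next
  show "{} \<notin> (\<lambda>i. range (x i)) ` UNIV" by auto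
qed

lemma CC_recover:
  assumes "x \<in> CC"
  shows "range (\<lambda>i. range (x i)) = {{b. (a,b) \<in> (\<Union>A\<in>range (\<lambda>i. range (x i)). A \<times> A)} | a. (a,a) \<in> (\<Union>A\<in>range (\<lambda>i. range (x i)). A \<times> A)}"
  by (rule family_recover) (use CC_fam[OF assms] in auto)

lemma reduction:
  assumes "x \<in> CC" "y \<in> CC"
  shows "eq_plus2 x y \<longleftrightarrow> eq_plus (ff x) (ff y)"
proof -
  have injP: "inj (\<lambda>(a,b). PP a b)"
  proof (rule injI)
    fix p q :: "real \<times> real" assume "(\<lambda>(a,b). PP a b) p = (\<lambda>(a,b). PP a b) q"
    then show "p = q" using PP_inj[of "fst p" "snd p" "fst q" "snd q"] by (cases p, cases q) simp
  qed
  have "eq_plus (ff x) (ff y) \<longleftrightarrow> (\<Union>A\<in>(\<lambda>i. range (x i)) ` UNIV. A \<times> A) = (\<Union>A\<in>(\<lambda>i. range (y i)) ` UNIV. A \<times> A)"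
    unfolding eq_plus_iff range_ff by (rule inj_image_eq_iff[OF injP])
  also have "\<dots> \<longleftrightarrow> (\<lambda>i. range (x i)) ` UNIV = (\<lambda>i. range (y i)) ` UNIV"
  proof
    assume "(\<Union>A\<in>(\<lambda>i. range (x i)) ` UNIV. A \<times> A) = (\<Union>A\<in>(\<lambda>i. range (y i)) ` UNIV. A \<times> A)"
    note h = this
    show "(\<lambda>i. range (x i)) ` UNIV = (\<lambda>i. range (y i)) ` UNIV"
      apply (subst CC_recover[OF assms(1)])
      apply (subst CC_recover[OF assms(2)])
      apply (simp only: h)
      done
  qed simp
  finally show ?thesis by (simp add: eq_plus2_iff)
qed

lemma ff_meas: "ff \<in> borel_measurable borel"
proof (rule measurable_coordinatewise_then_product)
  fix n
  obtain i m where im: "prod_decode n = (i, m)" by (cases "prod_decode n")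
  obtain k l where kl: "prod_decode m = (k, l)" by (cases "prod_decode m")
  from im kl have e: "(\<lambda>x. ff x n) = (\<lambda>x. PP (x i k) (x i l))"
    by (auto simp: ff_def fun_eq_iff)
  have m: "(\<lambda>x::nat\<Rightarrow>nat\<Rightarrow>real. x i k) \<in> borel_measurable borel" for i k
    using measurable_compose[OF measurable_product_coordinates[of i] measurable_product_coordinates[of k]]
    by simp
  show "(\<lambda>x. ff x n) \<in> borel_measurable borel"
    unfolding e by (intro PP_meas m)
qed



lemma coord_cont: "continuous_on UNIV (\<lambda>x::nat\<Rightarrow>nat\<Rightarrow>real. x i k)"
  by (rule continuous_on_product_then_coordinatewise[OF continuous_on_product_coordinates])

lemma Gs_open: "open {x::nat\<Rightarrow>nat\<Rightarrow>real. x i k \<noteq> x j l}"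
  by (rule open_Collect_neq[OF coord_cont coord_cont])

lemma Gs_dense:
  assumes "(i,k) \<noteq> (j,l)"
  shows "closure {x::nat\<Rightarrow>nat\<Rightarrow>real. x i k \<noteq> x j l} = UNIV"
proof (intro set_eqI iffI)
  fix x :: "nat\<Rightarrow>nat\<Rightarrow>real"
  show "x \<in> closure {x. x i k \<noteq> x j l}"
  proof (cases "x i k \<noteq> x j l")
    case True then show ?thesis using closure_subset[of "{x::nat\<Rightarrow>nat\<Rightarrow>real. x i k \<noteq> x j l}"] by (simp add: subset_iff)
  next
    case False
    define h where "h t = (\<lambda>a b. if a = i \<and> b = k then x i k + t else x a b)" for t :: real
    have hc: "continuous_on UNIV h"
    proof (intro continuous_on_coordinatewise_then_product)
      fix a b show "continuous_on UNIV (\<lambda>t. h t a b)"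
        by (cases "a = i \<and> b = k") (auto simp: h_def intro!: continuous_intros)
    qed
    have L: "((\<lambda>n. h (1 / Suc n)) \<longlongrightarrow> h 0) sequentially"
      by (rule continuous_on_tendsto_compose[OF hc LIMSEQ_Suc[OF lim_const_over_n[of 1]]]) auto
    have H0: "h 0 = x" by (auto simp: h_def fun_eq_iff)
    have M: "h (1 / Suc n) \<in> {x. x i k \<noteq> x j l}" for n
    proof -
      have e1: "h (1 / Suc n) i k = x i k + 1 / Suc n" by (simp add: h_def)
      have e2: "h (1 / Suc n) j l = x j l" using assms by (auto simp: h_def)
      have "(0::real) < 1 / Suc n" by simp
      then show ?thesis using e1 e2 False by simp
    qed
    show ?thesis unfolding closure_sequential
      using L M unfolding H0 by (intro exI[of _ "\<lambda>n. h (1 / Suc n)"]) blast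
  qed
qed simp

definition GG :: "nat \<Rightarrow> (nat\<Rightarrow>nat\<Rightarrow>real) set" where
  "GG n = (case prod_decode n of (a, b) \<Rightarrow> case prod_decode a of (i, k) \<Rightarrow> case prod_decode b of (j, l) \<Rightarrow>
     if (i,k) = (j,l) then UNIV else {x. x i k \<noteq> x j l})"

lemma GG_props: "open (GG n) \<and> closure (GG n) = UNIV"
  unfolding GG_def using Gs_open Gs_dense by (auto split: prod.splits)

lemma GG_sub: "(\<Inter>n. GG n) \<subseteq> CC"
proof
  fix x assume x: "x \<in> (\<Inter>n. GG n)"
  show "x \<in> CC" unfolding CC_def
  proof (intro CollectI allI impI)
    fix i k j l :: nat assume ne: "(i, k) \<noteq> (j, l)"
    have "x \<in> GG (prod_encode (prod_encode (i,k), prod_encode (j,l)))" using x by blast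
    then show "x i k \<noteq> x j l" using ne by (auto simp: GG_def split: if_splits)
  qed
qed

theorem claim1p6:
  shows "\<exists>C :: (nat \<Rightarrow> nat \<Rightarrow> real) set. comeager C \<and> borel_reducible_on C eq_plus2 eq_plus"
proof (intro exI conjI)
  show "comeager CC" unfolding comeager_def using GG_props GG_sub by blast
  show "borel_reducible_on CC eq_plus2 eq_plus"
    unfolding borel_reducible_on_def
    using measurable_restrict_space1[OF ff_meas] reduction by blast
qed

end
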